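(* Let $\mathcal T$ be the set of all finite strings of $0$'s and $1$'s (of length $\ge 1$), and for $\sigma=(\sigma_1,\dots,\sigma_{\ell(\sigma)})\in\mathcal T$ let $I(\sigma)=\left(\sum_{i=1}^{\ell(\sigma)}\sigma_i2^{-i},\;2^{-\ell(\sigma)}+\sum_{i=1}^{\ell(\sigma)}\sigma_i2^{-i}\right]$ and $d_\sigma=\mathbf 1_{I(\sigma)}$. Let $\Psi:\mathcal T\to\mathbb Z\setminus\{0\}$ be injective, let $d=\mathbf 1_{(0,1]}$, and for $\sigma\in\mathcal T$ let $f_\sigma=d_\sigma+\ell(\sigma)\cdot\mathbf 1_{(\Psi(\sigma),\Psi(\sigma)+1]}$. Then the subset $M=\{0,d\}\cup\{f_\sigma:\sigma\in\mathcal T\}$ of $L_1(-\infty,\infty)$, with the $L_1$ metric, is locally finite and admits no isometric embedding into $\ell_1$.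
   Context: $\ell(\sigma)$ denotes the length of the string $\sigma$, and $\mathbf 1_I$ the indicator function of a set $I\subset\mathbb R$. A metric space is locally finite if every ball of finite radius in it has finite cardinality. *)

theory Defs
  imports "HOL-Analysis.Analysis"
begin

text \<open>Binary strings of length at least 1, as boolean lists (True = 1, False = 0).\<close>
definition strings :: "bool list set" where
  "strings = {\<sigma>. length \<sigma> \<ge> 1}"

text \<open>Left endpoint: sum over i = 1..l of sigma_i 2^(-i) (0-indexed list access).\<close>
definition lend :: "bool list \<Rightarrow> real" where
  "lend \<sigma> = (\<Sum>i<length \<sigma>. of_bool (\<sigma> ! i) * (1/2) ^ (Suc i))"

definition Iv :: "bool list \<Rightarrow> real set" where
  "Iv \<sigma> = {lend \<sigma> <.. (1/2) ^ length \<sigma> + lend \<sigma>}"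

definition dfun :: "real \<Rightarrow> real" where
  "dfun = indicator {0<..1}"

definition fsig :: "(bool list \<Rightarrow> int) \<Rightarrow> bool list \<Rightarrow> real \<Rightarrow> real" where
  "fsig \<Psi> \<sigma> = (\<lambda>x. indicator (Iv \<sigma>) x
      + real (length \<sigma>) * indicator {real_of_int (\<Psi> \<sigma>) <.. real_of_int (\<Psi> \<sigma>) + 1} x)"

definition Mset :: "(bool list \<Rightarrow> int) \<Rightarrow> (real \<Rightarrow> real) set" where
  "Mset \<Psi> = {(\<lambda>x. 0), dfun} \<union> {fsig \<Psi> \<sigma> | \<sigma>. \<sigma> \<in> strings}"

definition L1dist :: "(real \<Rightarrow> real) \<Rightarrow> (real \<Rightarrow> real) \<Rightarrow> real" where
  "L1dist f g = (LINT x|lborel. \<bar>f x - g x\<bar>)"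

definition locally_finite_L1 :: "(real \<Rightarrow> real) set \<Rightarrow> bool" where
  "locally_finite_L1 M \<longleftrightarrow> (\<forall>m\<in>M. \<forall>r::real. finite {m'\<in>M. L1dist m m' \<le> r})"

definition embeds_isometrically_l1 :: "(real \<Rightarrow> real) set \<Rightarrow> bool" where
  "embeds_isometrically_l1 M \<longleftrightarrow> (\<exists>F :: (real \<Rightarrow> real) \<Rightarrow> nat \<Rightarrow> real.
      (\<forall>m\<in>M. summable (\<lambda>n. \<bar>F m n\<bar>)) \<and>
      (\<forall>m\<in>M. \<forall>m'\<in>M. (\<Sum>n. \<bar>F m n - F m' n\<bar>) = L1dist m m'))"

end

theory Submission
  imports Defs
begin


lemma lend_Nil[simp]: "lend [] = 0" by (simp add: lend_def)

lemma lend_Cons: "lend (b # s) = of_bool b / 2 + lend s / 2"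
proof -
  have "lend (b # s) = (\<Sum>i<Suc (length s). of_bool ((b#s) ! i) * (1/2) ^ (Suc i))"
    by (simp add: lend_def)
  also have "\<dots> = of_bool b / 2 + (\<Sum>i<length s. of_bool (s ! i) * (1/2) ^ (Suc (Suc i)))"
    by (subst sum.lessThan_Suc_shift) simp
  also have "(\<Sum>i<length s. of_bool (s ! i) * (1/2::real) ^ (Suc (Suc i))) = lend s / 2"
    by (simp add: lend_def sum_divide_distrib mult_ac)
  finally show ?thesis .
qed

lemma lend_bounds: "0 \<le> lend s \<and> lend s + (1/2) ^ length s \<le> 1"
  by (induction s) (auto simp: lend_Cons)

lemma lend_sep: "length s = length t \<Longrightarrow> s \<noteq> t \<Longrightarrow> \<bar>lend s - lend t\<bar> \<ge> (1/2) ^ length s"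
proof (induction s arbitrary: t)
  case Nil then show ?case by simp
next
  case (Cons b s)
  then obtain c t' where t: "t = c # t'" "length t' = length s" by (cases t) auto
  show ?case
  proof (cases "b = c")
    case True
    then have "s \<noteq> t'" using Cons t by auto
    then have "\<bar>lend s - lend t'\<bar> \<ge> (1/2) ^ length s" using Cons.IH[of t'] t by auto
    moreover have "\<bar>lend s / 2 - lend t' / 2\<bar> = \<bar>lend s - lend t'\<bar> / 2" by (simp add: abs_if field_simps)
    ultimately show ?thesis using True t by (auto simp: lend_Cons)
  next
    case False
    have "0 \<le> lend s \<and> lend s + (1/2) ^ length s \<le> 1" by (rule lend_bounds)
    moreover have "0 \<le> lend t' \<and> lend t' + (1/2) ^ length s \<le> 1" using lend_bounds[of t'] t by simp
    ultimately show ?thesis using False t by (cases b; cases c) (auto simp: lend_Cons abs_if)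
  qed
qed

lemma Iv_sub: "Iv s \<subseteq> {0<..1}"
  using lend_bounds[of s] by (auto simp: Iv_def)

lemma Iv_disj: "length s = length t \<Longrightarrow> s \<noteq> t \<Longrightarrow> Iv s \<inter> Iv t = {}"
  using lend_sep[of s t] by (auto simp: Iv_def abs_if split: if_splits)

lemma Iv_measure: "measure lborel (Iv s) = (1/2) ^ length s"
  by (simp add: Iv_def)



lemma Ioc_int_disj0: "(k::int) \<noteq> 0 \<Longrightarrow> x \<in> {real_of_int k<..real_of_int k + 1} \<Longrightarrow> x \<notin> {0<..1}"
proof
  assume k: "k \<noteq> 0" and x: "x \<in> {real_of_int k<..real_of_int k + 1}" and x2: "x \<in> {0<..1}"
  then have "real_of_int k < 1" "real_of_int k > -1" by auto
  then have "k < 1" "k > -1" by linarith+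
  with k show False by simp
qed

lemma Ioc_int_disj: "(k::int) \<noteq> k' \<Longrightarrow> x \<in> {real_of_int k<..real_of_int k + 1} \<Longrightarrow> x \<notin> {real_of_int k'<..real_of_int k' + 1}"
proof
  assume k: "k \<noteq> k'" and x: "x \<in> {real_of_int k<..real_of_int k + 1}" and x2: "x \<in> {real_of_int k'<..real_of_int k' + 1}"
  then have "real_of_int k < real_of_int k' + 1" "real_of_int k' < real_of_int k + 1" by auto
  then have "k < k' + 1" "k' < k + 1" by linarith+
  with k show False by simp
qed

lemma int_Ioc: "integrable lborel (indicator {a<..b} :: real \<Rightarrow> real)"
  by (cases "a \<le> b") (auto intro!: integrable_real_indicator simp: emeasure_lborel_Ioc)

lemma integral_Ioc: "a \<le> b \<Longrightarrow> (LINT x|lborel. indicator {a<..b} x) = (b - a :: real)"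
  by (simp add: integral_indicator)

lemma int_Iv: "integrable lborel (indicator (Iv s) :: real \<Rightarrow> real)"
  unfolding Iv_def by (rule int_Ioc)

lemma integral_Iv: "(LINT x|lborel. indicator (Iv s) x) = ((1/2) ^ length s :: real)"
  by (simp add: integral_indicator Iv_def)

lemma fsig_eq: "fsig \<Psi> s = (\<lambda>x. indicator (Iv s) x + real (length s) * indicator {real_of_int (\<Psi> s) <.. real_of_int (\<Psi> s) + 1} x)"
  by (simp add: fsig_def)

lemma int_fsig: "integrable lborel (fsig \<Psi> s)"
  unfolding fsig_eq by (intro Bochner_Integration.integrable_add integrable_mult_right int_Iv int_Ioc)

lemma int_dfun: "integrable lborel dfun"
  unfolding dfun_def by (rule int_Ioc)

lemma L1_0d: "L1dist (\<lambda>x. 0) dfun = 1"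
  by (simp add: L1dist_def dfun_def integral_indicator)

lemma L1_0f: "L1dist (\<lambda>x. 0) (fsig \<Psi> s) = real (length s) + (1/2) ^ length s"
proof -
  have "L1dist (\<lambda>x. 0) (fsig \<Psi> s) = (LINT x|lborel. indicator (Iv s) x + real (length s) * indicator {real_of_int (\<Psi> s) <.. real_of_int (\<Psi> s) + 1} x)"
    unfolding L1dist_def fsig_eq by (rule Bochner_Integration.integral_cong) (auto simp: indicator_def)
  also have "\<dots> = (1/2) ^ length s + real (length s)"
    by (simp add: Bochner_Integration.integral_add int_Iv int_Ioc integral_Iv integral_Ioc Iv_measure)
  finally show ?thesis by simp
qed

lemma L1_df: "\<Psi> s \<noteq> 0 \<Longrightarrow> L1dist dfun (fsig \<Psi> s) = 1 - (1/2) ^ length s + real (length s)"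
proof -
  assume k: "\<Psi> s \<noteq> 0"
  let ?B = "{real_of_int (\<Psi> s) <.. real_of_int (\<Psi> s) + 1}"
  have "L1dist dfun (fsig \<Psi> s) = (LINT x|lborel. (indicator {0<..1} x - indicator (Iv s) x) + real (length s) * indicator ?B x)"
    unfolding L1dist_def fsig_eq dfun_def
  proof (rule Bochner_Integration.integral_cong[OF refl])
    fix x
    show "\<bar>indicator {0<..1} x - (indicator (Iv s) x + real (length s) * indicator ?B x)\<bar> =
       indicator {0<..1} x - indicator (Iv s) x + real (length s) * indicator ?B x"
      using Ioc_int_disj0[OF k, of x] Iv_sub[of s] by (auto simp: indicator_def)
  qed
  also have "\<dots> = 1 - (1/2) ^ length s + real (length s)"
    by (simp add: Bochner_Integration.integral_add Bochner_Integration.integral_diff int_Iv int_Ioc integral_Iv integral_Ioc Iv_measure)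
  finally show ?thesis .
qed

lemma L1_ff: "\<Psi> s \<noteq> \<Psi> t \<Longrightarrow> \<Psi> s \<noteq> 0 \<Longrightarrow> \<Psi> t \<noteq> 0 \<Longrightarrow> Iv s \<inter> Iv t = {} \<Longrightarrow>
  L1dist (fsig \<Psi> s) (fsig \<Psi> t) = (1/2) ^ length s + (1/2) ^ length t + real (length s) + real (length t)"
proof -
  assume k: "\<Psi> s \<noteq> \<Psi> t" and ks: "\<Psi> s \<noteq> 0" and kt: "\<Psi> t \<noteq> 0" and D: "Iv s \<inter> Iv t = {}"
  let ?B = "{real_of_int (\<Psi> s) <.. real_of_int (\<Psi> s) + 1}"
  let ?C = "{real_of_int (\<Psi> t) <.. real_of_int (\<Psi> t) + 1}"
  have "L1dist (fsig \<Psi> s) (fsig \<Psi> t) = (LINT x|lborel. (indicator (Iv s) x + real (length s) * indicator ?B x) + (indicator (Iv t) x + real (length t) * indicator ?C x))"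
    unfolding L1dist_def fsig_eq
  proof (rule Bochner_Integration.integral_cong[OF refl])
    fix x
    show "\<bar>indicator (Iv s) x + real (length s) * indicator ?B x - (indicator (Iv t) x + real (length t) * indicator ?C x)\<bar> =
       (indicator (Iv s) x + real (length s) * indicator ?B x) + (indicator (Iv t) x + real (length t) * indicator ?C x)"
      using Ioc_int_disj0[OF ks, of x] Ioc_int_disj0[OF kt, of x] Ioc_int_disj[OF k, of x] Iv_sub[of s] Iv_sub[of t] D
      by (auto simp: indicator_def)
  qed
  also have "\<dots> = ((1/2) ^ length s + real (length s)) + ((1/2) ^ length t + real (length t))"
    by (simp add: Bochner_Integration.integral_add int_Iv int_Ioc integral_Iv integral_Ioc Iv_measure)
  finally show ?thesis by simp
qed

lemma L1_tri: "integrable lborel f \<Longrightarrow> integrable lborel g \<Longrightarrow> integrable lborel h \<Longrightarrow>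
  L1dist f h \<le> L1dist f g + L1dist g h"
proof -
  assume f: "integrable lborel f" and g: "integrable lborel g" and h: "integrable lborel h"
  have "L1dist f h \<le> (LINT x|lborel. \<bar>f x - g x\<bar> + \<bar>g x - h x\<bar>)"
    unfolding L1dist_def
    by (rule integral_mono) (auto intro!: integrable_abs integrable_diff integrable_add f g h)
  also have "\<dots> = L1dist f g + L1dist g h"
    unfolding L1dist_def
    by (rule Bochner_Integration.integral_add) (auto intro!: integrable_abs integrable_diff f g h)
  finally show ?thesis .
qed



lemma summable_abs_diff:
  fixes a b :: "nat \<Rightarrow> real"
  assumes "summable (\<lambda>n. \<bar>a n\<bar>)" "summable (\<lambda>n. \<bar>b n\<bar>)"
  shows "summable (\<lambda>n. \<bar>a n - b n\<bar>)"
proof (rule summable_comparison_test)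
  show "\<exists>N. \<forall>n\<ge>N. norm \<bar>a n - b n\<bar> \<le> \<bar>a n\<bar> + \<bar>b n\<bar>" by auto
  show "summable (\<lambda>n. \<bar>a n\<bar> + \<bar>b n\<bar>)" using assms by (rule summable_add)
qed

lemma sum_one_nonzero:
  fixes g :: "'a \<Rightarrow> real"
  assumes "finite S" "\<And>s. s \<in> S \<Longrightarrow> 0 \<le> g s \<and> g s \<le> B" "0 \<le> B"
    "\<And>s t. s \<in> S \<Longrightarrow> t \<in> S \<Longrightarrow> s \<noteq> t \<Longrightarrow> g s * g t = 0"
  shows "sum g S \<le> B"
proof (cases "\<forall>s\<in>S. g s = 0")
  case True then show ?thesis using assms by simp
next
  case False
  then obtain s0 where s0: "s0 \<in> S" "g s0 \<noteq> 0" by auto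
  have "sum g S = g s0 + sum g (S - {s0})" using assms(1) s0(1) by (rule sum.remove)
  also have "sum g (S - {s0}) = 0"
    using assms(4)[OF s0(1)] s0 by (intro sum.neutral) auto
  finally show ?thesis using assms(2)[OF s0(1)] by simp
qed

lemma coord_lemma:
  fixes a b u :: real
  assumes "\<bar>a\<bar> + \<bar>b\<bar> - \<bar>a - b\<bar> = 0"
  shows "(\<bar>a\<bar> + \<bar>u\<bar> - \<bar>a - u\<bar>) * (\<bar>b\<bar> + \<bar>u\<bar> - \<bar>b - u\<bar>) = 0"
  unfolding mult_eq_0_iff using assms
  by (cases "a \<ge> 0"; cases "b \<ge> 0"; cases "u \<ge> 0"; cases "a \<ge> u"; cases "b \<ge> u"; cases "a \<ge> b"; simp add: abs_if; linarith)

lemma no_embed: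
  assumes inj: "inj_on \<Psi> strings" and nz: "\<forall>\<sigma>\<in>strings. \<Psi> \<sigma> \<noteq> 0"
  shows "\<not> embeds_isometrically_l1 (Mset \<Psi>)"
proof
  assume "embeds_isometrically_l1 (Mset \<Psi>)"
  then obtain F where Fs: "\<forall>m\<in>Mset \<Psi>. summable (\<lambda>n. \<bar>F m n\<bar>)"
    and Fd: "\<forall>m\<in>Mset \<Psi>. \<forall>m'\<in>Mset \<Psi>. (\<Sum>n. \<bar>F m n - F m' n\<bar>) = L1dist m m'"
    unfolding embeds_isometrically_l1_def by blast
  define z where "z = (\<lambda>x::real. 0::real)"
  have zM: "z \<in> Mset \<Psi>" and dM: "dfun \<in> Mset \<Psi>" by (auto simp: Mset_def z_def)
  have fM: "fsig \<Psi> s \<in> Mset \<Psi>" if "s \<in> strings" for s using that by (auto simp: Mset_def)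
  define u where "u n = F dfun n - F z n" for n
  define y where "y s n = F (fsig \<Psi> s) n - F z n" for s n
  have su: "summable (\<lambda>n. \<bar>u n\<bar>)" unfolding u_def
    using summable_abs_diff Fs zM dM by blast
  have sy: "summable (\<lambda>n. \<bar>y s n\<bar>)" if "s \<in> strings" for s unfolding y_def
    using summable_abs_diff Fs zM fM[OF that] by blast
  have syu: "summable (\<lambda>n. \<bar>y s n - u n\<bar>)" if "s \<in> strings" for s unfolding y_def u_def
    using summable_abs_diff[of "\<lambda>n. F (fsig \<Psi> s) n" "\<lambda>n. F dfun n"] Fs dM fM[OF that] by simp
  have syy: "summable (\<lambda>n. \<bar>y s n - y t n\<bar>)" if "s \<in> strings" "t \<in> strings" for s t unfolding y_def
    using summable_abs_diff[of "\<lambda>n. F (fsig \<Psi> s) n" "\<lambda>n. F (fsig \<Psi> t) n"] Fs fM[OF that(1)] fM[OF that(2)] by simp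
  have U: "(\<Sum>n. \<bar>u n\<bar>) = 1"
  proof -
    have "(\<Sum>n. \<bar>F z n - F dfun n\<bar>) = 1" using Fd zM dM L1_0d by (simp add: z_def)
    then show ?thesis unfolding u_def by (simp add: abs_minus_commute)
  qed
  have Y: "(\<Sum>n. \<bar>y s n\<bar>) = real (length s) + (1/2) ^ length s" if "s \<in> strings" for s
  proof -
    have "(\<Sum>n. \<bar>F z n - F (fsig \<Psi> s) n\<bar>) = real (length s) + (1/2) ^ length s"
      using Fd zM fM[OF that] L1_0f[of \<Psi> s] by (simp add: z_def)
    then show ?thesis unfolding y_def by (simp add: abs_minus_commute)
  qed
  have YU: "(\<Sum>n. \<bar>y s n - u n\<bar>) = 1 - (1/2) ^ length s + real (length s)" if "s \<in> strings" for s
  proof -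
    have "(\<Sum>n. \<bar>F dfun n - F (fsig \<Psi> s) n\<bar>) = 1 - (1/2) ^ length s + real (length s)"
      using Fd dM fM[OF that] L1_df[of \<Psi> s] nz that by simp
    then show ?thesis unfolding y_def u_def by (simp add: abs_minus_commute)
  qed
  have YY: "(\<Sum>n. \<bar>y s n - y t n\<bar>) = 2 * (1/2) ^ length s + 2 * real (length s)"
    if "s \<in> strings" "t \<in> strings" "s \<noteq> t" "length s = length t" for s t
  proof -
    have "\<Psi> s \<noteq> \<Psi> t" using inj that unfolding inj_on_def by blast
    then have "(\<Sum>n. \<bar>F (fsig \<Psi> s) n - F (fsig \<Psi> t) n\<bar>) = 2 * (1/2) ^ length s + 2 * real (length s)"
      using Fd fM[OF that(1)] fM[OF that(2)] L1_ff[of \<Psi> s t] nz that Iv_disj[of s t] by simp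
    then show ?thesis unfolding y_def by simp
  qed
  define q where "q s n = \<bar>y s n\<bar> + \<bar>u n\<bar> - \<bar>y s n - u n\<bar>" for s n
  have q_nonneg: "0 \<le> q s n" for s n unfolding q_def by linarith
  have q_le: "q s n \<le> 2 * \<bar>u n\<bar>" for s n unfolding q_def by linarith
  have sq: "summable (q s)" if "s \<in> strings" for s
    unfolding q_def[abs_def] using sy[OF that] su syu[OF that]
    by (intro summable_diff summable_add)
  have Q: "(\<Sum>n. q s n) = 2 * (1/2) ^ length s" if "s \<in> strings" for s
  proof -
    have "(\<Sum>n. q s n) = (\<Sum>n. \<bar>y s n\<bar>) + (\<Sum>n. \<bar>u n\<bar>) - (\<Sum>n. \<bar>y s n - u n\<bar>)"
      unfolding q_def[abs_def] using sy[OF that] su syu[OF that]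
      by (simp add: suminf_diff suminf_add summable_add)
    then show ?thesis using Y[OF that] U YU[OF that] by simp
  qed
  have q_pt: "q s n \<le> 2 * (1/2) ^ length s" if "s \<in> strings" for s n
  proof -
    have "sum (q s) {n} \<le> (\<Sum>n. q s n)"
      by (rule sum_le_suminf[OF sq[OF that]]) (auto simp: q_nonneg)
    then show ?thesis using Q[OF that] by simp
  qed
  have q_disj: "q s n * q t n = 0"
    if "s \<in> strings" "t \<in> strings" "s \<noteq> t" "length s = length t" for s t n
  proof -
    define w where "w n = \<bar>y s n\<bar> + \<bar>y t n\<bar> - \<bar>y s n - y t n\<bar>" for n
    have w0: "0 \<le> w n" for n unfolding w_def by linarith
    have sw: "summable w" unfolding w_def[abs_def]
      using sy[OF that(1)] sy[OF that(2)] syy[OF that(1,2)] by (intro summable_diff summable_add)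
    have "(\<Sum>n. w n) = (\<Sum>n. \<bar>y s n\<bar>) + (\<Sum>n. \<bar>y t n\<bar>) - (\<Sum>n. \<bar>y s n - y t n\<bar>)"
      unfolding w_def[abs_def] using sy[OF that(1)] sy[OF that(2)] syy[OF that(1,2)]
      by (simp add: suminf_diff suminf_add summable_add)
    also have "\<dots> = 0" using Y[OF that(1)] Y[OF that(2)] YY[OF that] that(4) by simp
    finally have "\<forall>n. w n = 0" using suminf_eq_zero_iff[OF sw] w0 by blast
    then show ?thesis unfolding q_def using coord_lemma[of "y s n" "y t n" "u n"] w_def by simp
  qed
  obtain n0 where n0: "u n0 \<noteq> 0"
  proof -
    have "\<not> (\<forall>n. \<bar>u n\<bar> = 0)"
    proof
      assume "\<forall>n. \<bar>u n\<bar> = 0"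
      then have "(\<lambda>n. \<bar>u n\<bar>) = (\<lambda>n. 0)" by auto
      then show False using U by simp
    qed
    then show ?thesis using that by auto
  qed
  obtain N where N: "(1/2::real) ^ N < \<bar>u n0\<bar>"
    using real_arch_pow_inv[of "\<bar>u n0\<bar>" "1/2"] n0 by auto
  define l where "l = Suc N"
  have hl: "(1/2::real) ^ l < \<bar>u n0\<bar>"
  proof -
    have "(1/2::real) ^ l \<le> (1/2) ^ N" unfolding l_def by (simp add: power_decreasing)
    then show ?thesis using N by linarith
  qed
  define S where "S = {s::bool list. length s = l}"
  have S_eq: "S = {xs. set xs \<subseteq> UNIV \<and> length xs = l}" unfolding S_def by simp
  have finS: "finite S" unfolding S_eq by (rule finite_lists_length_eq) simp
  have cardS: "card S = 2 ^ l" unfolding S_eq by (subst card_lists_length_eq) (auto simp: card_UNIV_bool)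
  have Sstr: "s \<in> strings" if "s \<in> S" for s using that by (simp add: S_def strings_def l_def)
  have bound: "(\<Sum>s\<in>S. q s n) \<le> 2 * \<bar>u n\<bar>" for n
    by (rule sum_one_nonzero[OF finS]) (auto simp: q_nonneg q_le q_disj Sstr S_def)
  have bound0: "(\<Sum>s\<in>S. q s n0) \<le> 2 * (1/2) ^ l"
    by (rule sum_one_nonzero[OF finS]) (auto simp: q_nonneg q_pt q_disj Sstr S_def dest: q_pt[OF Sstr])
  define D where "D n = 2 * \<bar>u n\<bar> - (\<Sum>s\<in>S. q s n)" for n
  have sD: "summable D" unfolding D_def[abs_def]
    using su sq Sstr by (intro summable_diff summable_mult summable_sum) auto
  have "(\<Sum>n. D n) = 2 * (\<Sum>n. \<bar>u n\<bar>) - (\<Sum>n. \<Sum>s\<in>S. q s n)"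
  proof -
    have s1: "summable (\<lambda>n. 2 * \<bar>u n\<bar>)" using su by (rule summable_mult)
    have s2: "summable (\<lambda>n. \<Sum>s\<in>S. q s n)" using sq Sstr by (intro summable_sum) auto
    show ?thesis unfolding D_def using suminf_diff[OF s1 s2] suminf_mult[OF su, of 2] by simp
  qed
  also have "(\<Sum>n. \<Sum>s\<in>S. q s n) = (\<Sum>s\<in>S. \<Sum>n. q s n)"
    using sq Sstr by (intro suminf_sum) auto
  also have "\<dots> = (\<Sum>s\<in>S. 2 * (1/2) ^ l)" using Q Sstr by (intro sum.cong) (auto simp: S_def)
  also have "\<dots> = 2" using cardS by (simp add: power_one_over)
  finally have D0: "(\<Sum>n. D n) = 0" using U by simp
  have "sum D {n0} \<le> (\<Sum>n. D n)"
    by (rule sum_le_suminf[OF sD]) (auto simp: D_def bound)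
  moreover have "D n0 > 0" unfolding D_def using bound0 hl by linarith
  ultimately show False using D0 by simp
qed

lemma Mset_cases: "m \<in> Mset \<Psi> \<Longrightarrow> m = (\<lambda>x. 0) \<or> m = dfun \<or> (\<exists>s\<in>strings. m = fsig \<Psi> s)"
  by (auto simp: Mset_def)

lemma Mset_int: "m \<in> Mset \<Psi> \<Longrightarrow> integrable lborel m"
  using Mset_cases[of m \<Psi>] int_dfun int_fsig by auto

lemma loc_fin: "locally_finite_L1 (Mset \<Psi>)"
  unfolding locally_finite_L1_def
proof (intro ballI allI)
  fix m r assume m: "m \<in> Mset \<Psi>"
  define K where "K = nat \<lceil>r + L1dist (\<lambda>x. 0) m\<rceil>"
  have "{m' \<in> Mset \<Psi>. L1dist m m' \<le> r} \<subseteq> {(\<lambda>x. 0), dfun} \<union> fsig \<Psi> ` {xs. set xs \<subseteq> UNIV \<and> length xs \<le> K}"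
  proof
    fix m' assume "m' \<in> {m' \<in> Mset \<Psi>. L1dist m m' \<le> r}"
    then have m': "m' \<in> Mset \<Psi>" "L1dist m m' \<le> r" by auto
    show "m' \<in> {(\<lambda>x. 0), dfun} \<union> fsig \<Psi> ` {xs. set xs \<subseteq> UNIV \<and> length xs \<le> K}"
    proof (cases "\<exists>s\<in>strings. m' = fsig \<Psi> s")
      case True
      then obtain s where s: "m' = fsig \<Psi> s" by auto
      have "L1dist (\<lambda>x. 0) m' \<le> L1dist (\<lambda>x. 0) m + L1dist m m'"
        by (rule L1_tri) (auto intro: Mset_int m m')
      then have "real (length s) + (1/2) ^ length s \<le> L1dist (\<lambda>x. 0) m + r"
        using m' s L1_0f[of \<Psi> s] by simp
      then have "real (length s) \<le> r + L1dist (\<lambda>x. 0) m"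
        using zero_le_power[of "1/2::real" "length s"] by linarith
      also have "\<dots> \<le> real_of_int \<lceil>r + L1dist (\<lambda>x. 0) m\<rceil>" by (rule le_of_int_ceiling)
      finally have "int (length s) \<le> \<lceil>r + L1dist (\<lambda>x. 0) m\<rceil>" by linarith
      then have "length s \<le> K" unfolding K_def by linarith
      then show ?thesis using s by auto
    next
      case False then show ?thesis using Mset_cases[OF m'(1)] by auto
    qed
  qed
  moreover have "finite ({(\<lambda>x. 0), dfun} \<union> fsig \<Psi> ` {xs. set xs \<subseteq> UNIV \<and> length xs \<le> K})"
    by (intro finite_UnI finite_imageI finite_lists_length_le) auto
  ultimately show "finite {m' \<in> Mset \<Psi>. L1dist m m' \<le> r}" by (rule finite_subset)
qed

theorem mainTheorem7:
  fixes \<Psi> :: "bool list \<Rightarrow> int"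
  assumes "inj_on \<Psi> strings"
    and "\<forall>\<sigma>\<in>strings. \<Psi> \<sigma> \<noteq> 0"
  shows "(\<forall>m\<in>Mset \<Psi>. integrable lborel m)
    \<and> locally_finite_L1 (Mset \<Psi>)
    \<and> \<not> embeds_isometrically_l1 (Mset \<Psi>)"
  using Mset_int loc_fin no_embed[OF assms] by blast

end
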